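(* $\mathrm{HS}_{\mathsf{lin}}$ is at least exponentially more succinct than $\mathrm{LTL}$: there is a family of $\mathrm{HS}$ formulas $(\psi_n)_{n\ge1}$ such that, for every $n$, no $\mathrm{LTL}$ formula equivalent to $\psi_n$ (equivalence meaning: for every finite Kripke structure $K$, $K\models_{\mathsf{lin}}\psi_n$ iff $K\models\varphi$) has size bounded by a polynomial in $|\psi_n|$.
   Context: A Kripke structure over a finite set $\mathcal{AP}$ of proposition letters is $K=(\mathcal{AP},S,\delta,\mu,s_0)$ with state set $S$, left-total transition relation $\delta\subseteq S\times S$, labelling $\mu:S\to 2^{\mathcal{AP}}$, initial state $s_0$; $K$ is finite if $S$ is finite. An infinite path is an infinite sequence $\pi$ of states with $(\pi(i),\pi(i+1))\in\delta$; it is initial if $\pi(0)=s_0$. The size $|\varphi|$ of a formula is its number of symbols/subformulas. $\mathrm{HS}$ formulas: $\psi::=p\mid\neg\psi\mid\psi\wedge\psi\mid\langle X\rangle\psi$, $X$ ranging over the Allen relations $A,L,B,E,D,O$ and their inverses $\bar A,\dots,\bar O$; $[X]\psi:=\neg\langle X\rangle\neg\psi$. Under the non-strict semantics all modalities are definable from $\langle B\rangle,\langle E\rangle,\langle\bar B\rangle,\langle\bar E\rangle$. Trace-based semantics: for an infinite path $\pi$, intervals are $[i,j]$ with $0\le i\le j$; $[i,j]\models p$ iff $p\in\mu(\pi(h))$ for all $i\le h\le j$; $[x,y]\models\langle B\rangle\psi$ iff $[x,z]\models\psi$ for some $x\le z<y$; $[x,y]\models\langle E\rangle\psi$ iff $[v,y]\models\psi$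 for some $x<v\le y$; $[x,y]\models\langle\bar B\rangle\psi$ iff $[x,z]\models\psi$ for some $z>y$; $[x,y]\models\langle\bar E\rangle\psi$ iff $[v,y]\models\psi$ for some $v<x$. $K\models_{\mathsf{lin}}\psi$ iff for every initial infinite path $\pi$ and every $i\ge0$, $[0,i]\models\psi$ in $\pi$; $\mathrm{HS}_{\mathsf{lin}}$ is $\mathrm{HS}$ under this semantics. $\mathrm{LTL}$: $\varphi::=\top\mid p\mid\neg\varphi\mid\varphi\wedge\varphi\mid\mathsf X\varphi\mid\varphi\,\mathsf U\,\varphi$ with the standard semantics over infinite paths; $K\models\varphi$ iff $\pi,0\models\varphi$ for every initial infinite path $\pi$. *)

theory Defs
  imports Main
begin

text \<open>Proposition letters and states are natural numbers (any finite structure is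
isomorphic to one whose states are naturals).\<close>

record kripke =
  AP   :: "nat set"
  St   :: "nat set"
  Tr   :: "(nat \<times> nat) set"
  Lab  :: "nat \<Rightarrow> nat set"
  Init :: nat

definition kripke_structure :: "kripke \<Rightarrow> bool" where
  "kripke_structure K \<longleftrightarrow>
     finite (AP K) \<and> Init K \<in> St K \<and> Tr K \<subseteq> St K \<times> St K \<and>
     (\<forall>s\<in>St K. \<exists>t. (s, t) \<in> Tr K) \<and> (\<forall>s\<in>St K. Lab K s \<subseteq> AP K)"

definition finite_kripke :: "kripke \<Rightarrow> bool" where
  "finite_kripke K \<longleftrightarrow> kripke_structure K \<and> finite (St K)"

definition initial_path :: "kripke \<Rightarrow> (nat \<Rightarrow> nat) \<Rightarrow> bool" where
  "initial_path K \<pi> \<longleftrightarrow> \<pi> 0 = Init K \<and> (\<forall>i. (\<pi> i, \<pi> (Suc i)) \<in> Tr K)"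

datatype allen = RA | RL | RB | RE | RD | RO | RAbar | RLbar | RBbar | REbar | RDbar | RObar

datatype hs = HProp nat | HNot hs | HAnd hs hs | HDia allen hs

fun hs_size :: "hs \<Rightarrow> nat" where
  "hs_size (HProp p) = 1"
| "hs_size (HNot f) = 1 + hs_size f"
| "hs_size (HAnd f g) = 1 + hs_size f + hs_size g"
| "hs_size (HDia X f) = 1 + hs_size f"

fun hs_props :: "hs \<Rightarrow> nat set" where
  "hs_props (HProp p) = {p}"
| "hs_props (HNot f) = hs_props f"
| "hs_props (HAnd f g) = hs_props f \<union> hs_props g"
| "hs_props (HDia X f) = hs_props f"

text \<open>Trace-based semantics on intervals [x,y], x \<le> y, of an infinite path.\<close>
fun hs_sat :: "kripke \<Rightarrow> (nat \<Rightarrow> nat) \<Rightarrow> nat \<Rightarrow> nat \<Rightarrow> hs \<Rightarrow> bool" where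
  "hs_sat K \<pi> x y (HProp p) = (\<forall>h. x \<le> h \<and> h \<le> y \<longrightarrow> p \<in> Lab K (\<pi> h))"
| "hs_sat K \<pi> x y (HNot f) = (\<not> hs_sat K \<pi> x y f)"
| "hs_sat K \<pi> x y (HAnd f g) = (hs_sat K \<pi> x y f \<and> hs_sat K \<pi> x y g)"
| "hs_sat K \<pi> x y (HDia X f) = (case X of
      RA \<Rightarrow> (\<exists>v. y \<le> v \<and> hs_sat K \<pi> y v f)
    | RAbar \<Rightarrow> (\<exists>v. v \<le> x \<and> hs_sat K \<pi> v x f)
    | RL \<Rightarrow> (\<exists>z v. y < z \<and> z \<le> v \<and> hs_sat K \<pi> z v f)
    | RLbar \<Rightarrow> (\<exists>z v. z \<le> v \<and> v < x \<and> hs_sat K \<pi> z v f)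
    | RB \<Rightarrow> (\<exists>z. x \<le> z \<and> z < y \<and> hs_sat K \<pi> x z f)
    | RBbar \<Rightarrow> (\<exists>z. y < z \<and> hs_sat K \<pi> x z f)
    | RE \<Rightarrow> (\<exists>v. x < v \<and> v \<le> y \<and> hs_sat K \<pi> v y f)
    | REbar \<Rightarrow> (\<exists>v. v < x \<and> hs_sat K \<pi> v y f)
    | RD \<Rightarrow> (\<exists>v z. x < v \<and> v \<le> z \<and> z < y \<and> hs_sat K \<pi> v z f)
    | RDbar \<Rightarrow> (\<exists>v z. v < x \<and> y < z \<and> hs_sat K \<pi> v z f)
    | RO \<Rightarrow> (\<exists>v z. x < v \<and> v \<le> y \<and> y < z \<and> hs_sat K \<pi> v z f)
    | RObar \<Rightarrow> (\<exists>v z. v < x \<and> x \<le> z \<and> z < y \<and> hs_sat K \<pi> v z f))"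

definition hs_lin_models :: "kripke \<Rightarrow> hs \<Rightarrow> bool" where
  "hs_lin_models K \<psi> \<longleftrightarrow> (\<forall>\<pi>. initial_path K \<pi> \<longrightarrow> (\<forall>i. hs_sat K \<pi> 0 i \<psi>))"

datatype ltl = LTrue | LProp nat | LNot ltl | LAnd ltl ltl | LNext ltl | LUntil ltl ltl

fun ltl_size :: "ltl \<Rightarrow> nat" where
  "ltl_size LTrue = 1"
| "ltl_size (LProp p) = 1"
| "ltl_size (LNot f) = 1 + ltl_size f"
| "ltl_size (LAnd f g) = 1 + ltl_size f + ltl_size g"
| "ltl_size (LNext f) = 1 + ltl_size f"
| "ltl_size (LUntil f g) = 1 + ltl_size f + ltl_size g"

fun ltl_sat :: "kripke \<Rightarrow> (nat \<Rightarrow> nat) \<Rightarrow> nat \<Rightarrow> ltl \<Rightarrow> bool" where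
  "ltl_sat K \<pi> i LTrue = True"
| "ltl_sat K \<pi> i (LProp p) = (p \<in> Lab K (\<pi> i))"
| "ltl_sat K \<pi> i (LNot f) = (\<not> ltl_sat K \<pi> i f)"
| "ltl_sat K \<pi> i (LAnd f g) = (ltl_sat K \<pi> i f \<and> ltl_sat K \<pi> i g)"
| "ltl_sat K \<pi> i (LNext f) = ltl_sat K \<pi> (Suc i) f"
| "ltl_sat K \<pi> i (LUntil f g) =
     (\<exists>j\<ge>i. ltl_sat K \<pi> j g \<and> (\<forall>k. i \<le> k \<and> k < j \<longrightarrow> ltl_sat K \<pi> k f))"

definition ltl_models :: "kripke \<Rightarrow> ltl \<Rightarrow> bool" where
  "ltl_models K \<phi> \<longleftrightarrow> (\<forall>\<pi>. initial_path K \<pi> \<longrightarrow> ltl_sat K \<pi> 0 \<phi>)"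

definition hs_ltl_equiv :: "hs \<Rightarrow> ltl \<Rightarrow> bool" where
  "hs_ltl_equiv \<psi> \<phi> \<longleftrightarrow>
     (\<forall>K. finite_kripke K \<and> hs_props \<psi> \<subseteq> AP K \<longrightarrow> (hs_lin_models K \<psi> \<longleftrightarrow> ltl_models K \<phi>))"

end

theory Submission
  imports Defs
begin

fun lsat :: "(nat \<Rightarrow> nat set) \<Rightarrow> nat \<Rightarrow> ltl \<Rightarrow> bool" where
  "lsat w i LTrue = True"
| "lsat w i (LProp p) = (p \<in> w i)"
| "lsat w i (LNot f) = (\<not> lsat w i f)"
| "lsat w i (LAnd f g) = (lsat w i f \<and> lsat w i g)"
| "lsat w i (LNext f) = lsat w (Suc i) f"
| "lsat w i (LUntil f g) =
     (\<exists>j\<ge>i. lsat w j g \<and> (\<forall>k. i \<le> k \<and> k < j \<longrightarrow> lsat w k f))"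

lemma ltl_sat_lsat: "ltl_sat K \<pi> i \<phi> = lsat (\<lambda>j. Lab K (\<pi> j)) i \<phi>"
  by (induction \<phi> arbitrary: i) auto

lemma lsat_cong: "\<forall>j\<ge>i. w j = w' j \<Longrightarrow> lsat w i \<phi> = lsat w' i \<phi>"
proof (induction \<phi> arbitrary: i)
  case LTrue then show ?case by simp
next
  case (LProp p) then show ?case by simp
next
  case (LNot f) then show ?case by simp
next
  case (LAnd f g) then show ?case by simp
next
  case (LNext f)
  have "\<forall>j\<ge>Suc i. w j = w' j" using LNext.prems by simp
  then show ?case using LNext.IH by simp
next
  case (LUntil f g)
  have fk: "lsat w k f = lsat w' k f" if "i \<le> k" for k
    using LUntil.IH(1)[of k] LUntil.prems that by simp
  have gk: "lsat w k g = lsat w' k g" if "i \<le> k" for k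
    using LUntil.IH(2)[of k] LUntil.prems that by simp
  show ?case unfolding lsat.simps
  proof
    assume "\<exists>j\<ge>i. lsat w j g \<and> (\<forall>k. i \<le> k \<and> k < j \<longrightarrow> lsat w k f)"
    then obtain j where j: "j \<ge> i" "lsat w j g" "\<forall>k. i \<le> k \<and> k < j \<longrightarrow> lsat w k f" by blast
    have "\<forall>k. i \<le> k \<and> k < j \<longrightarrow> lsat w' k f" using j(3) fk by blast
    moreover have "lsat w' j g" using j(2) gk[OF j(1)] by simp
    ultimately show "\<exists>j\<ge>i. lsat w' j g \<and> (\<forall>k. i \<le> k \<and> k < j \<longrightarrow> lsat w' k f)" using j(1) by blast
  next
    assume "\<exists>j\<ge>i. lsat w' j g \<and> (\<forall>k. i \<le> k \<and> k < j \<longrightarrow> lsat w' k f)"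
    then obtain j where j: "j \<ge> i" "lsat w' j g" "\<forall>k. i \<le> k \<and> k < j \<longrightarrow> lsat w' k f" by blast
    have "\<forall>k. i \<le> k \<and> k < j \<longrightarrow> lsat w k f" using j(3) fk by blast
    moreover have "lsat w j g" using j(2) gk[OF j(1)] by simp
    ultimately show "\<exists>j\<ge>i. lsat w j g \<and> (\<forall>k. i \<le> k \<and> k < j \<longrightarrow> lsat w k f)" using j(1) by blast
  qed
qed

lemma lsat_until_unfold:
  "lsat w i (LUntil f g) = (lsat w i g \<or> (lsat w i f \<and> lsat w (Suc i) (LUntil f g)))"
proof
  assume "lsat w i (LUntil f g)"
  then obtain j where j1: "j \<ge> i" and j2: "lsat w j g" and j3: "\<forall>k. i \<le> k \<and> k < j \<longrightarrow> lsat w k f"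
    unfolding lsat.simps by blast
  show "lsat w i g \<or> (lsat w i f \<and> lsat w (Suc i) (LUntil f g))"
  proof (cases "j = i")
    case True then show ?thesis using j2 by simp
  next
    case False
    then have ij: "i < j" using j1 by simp
    have fi: "lsat w i f" using j3 ij by simp
    have "\<forall>k. Suc i \<le> k \<and> k < j \<longrightarrow> lsat w k f" using j3 by simp
    then have "lsat w (Suc i) (LUntil f g)" unfolding lsat.simps using ij j2 by (intro exI[of _ j]) simp
    then show ?thesis using fi by simp
  qed
next
  assume "lsat w i g \<or> (lsat w i f \<and> lsat w (Suc i) (LUntil f g))"
  then show "lsat w i (LUntil f g)"
  proof
    assume "lsat w i g" then show ?thesis unfolding lsat.simps by (intro exI[of _ i]) auto
  next
    assume a: "lsat w i f \<and> lsat w (Suc i) (LUntil f g)"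
    then obtain j where j1: "j \<ge> Suc i" and j2: "lsat w j g" and j3: "\<forall>k. Suc i \<le> k \<and> k < j \<longrightarrow> lsat w k f"
      unfolding lsat.simps by blast
    have "\<forall>k. i \<le> k \<and> k < j \<longrightarrow> lsat w k f"
    proof (intro allI impI)
      fix k assume k: "i \<le> k \<and> k < j"
      show "lsat w k f"
      proof (cases "k = i")
        case True then show ?thesis using a by simp
      next
        case False then show ?thesis using j3 k by simp
      qed
    qed
    then show ?thesis unfolding lsat.simps using j1 j2 by (intro exI[of _ j]) simp
  qed
qed

fun subs :: "ltl \<Rightarrow> ltl set" where
  "subs LTrue = {LTrue}"
| "subs (LProp p) = {LProp p}"
| "subs (LNot f) = insert (LNot f) (subs f)"
| "subs (LAnd f g) = insert (LAnd f g) (subs f \<union> subs g)"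
| "subs (LNext f) = insert (LNext f) (subs f)"
| "subs (LUntil f g) = insert (LUntil f g) (subs f \<union> subs g)"

lemma finite_subs: "finite (subs \<phi>)"
  by (induction \<phi>) auto

lemma card_subs: "card (subs \<phi>) \<le> ltl_size \<phi>"
proof (induction \<phi>)
  case (LNot f) then show ?case using card_insert_le_m1[of 1 "subs f"] finite_subs
    by (simp add: card_insert_if)
next
  case (LAnd f g)
  have "card (subs (LAnd f g)) \<le> Suc (card (subs f \<union> subs g))"
    by (simp add: card_insert_if finite_subs)
  also have "\<dots> \<le> Suc (card (subs f) + card (subs g))" using card_Un_le by simp
  finally show ?case using LAnd by simp
next
  case (LNext f) then show ?case by (simp add: card_insert_if finite_subs)
next
  case (LUntil f g)
  have "card (subs (LUntil f g)) \<le> Suc (card (subs f \<union> subs g))"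
    by (simp add: card_insert_if finite_subs)
  also have "\<dots> \<le> Suc (card (subs f) + card (subs g))" using card_Un_le by simp
  finally show ?case using LUntil by simp
qed auto

lemma subs_self: "\<phi> \<in> subs \<phi>"
  by (cases \<phi>) auto

lemma subs_trans: "\<chi> \<in> subs \<phi> \<Longrightarrow> subs \<chi> \<subseteq> subs \<phi>"
  by (induction \<phi>) auto

lemma step_lemma:
  assumes "w 0 = w' 0" "\<forall>\<chi>\<in>subs \<phi>. lsat w 1 \<chi> = lsat w' 1 \<chi>"
  shows "\<chi> \<in> subs \<phi> \<Longrightarrow> lsat w 0 \<chi> = lsat w' 0 \<chi>"
proof (induction \<chi>)
  case LTrue then show ?case by simp
next
  case (LProp p) then show ?case using assms(1) by simp
next
  case (LNot f)
  have "f \<in> subs \<phi>" using subs_trans[OF LNot.prems] subs_self[of f] by auto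
  then show ?case using LNot.IH by simp
next
  case (LAnd f g)
  have "f \<in> subs \<phi>" "g \<in> subs \<phi>" using subs_trans[OF LAnd.prems] subs_self[of f] subs_self[of g] by auto
  then show ?case using LAnd.IH by simp
next
  case (LNext f)
  have "f \<in> subs \<phi>" using subs_trans[OF LNext.prems] subs_self[of f] by auto
  then have "lsat w 1 f = lsat w' 1 f" using assms(2) by blast
  then show ?case by simp
next
  case (LUntil f g)
  have "f \<in> subs \<phi>" "g \<in> subs \<phi>" using subs_trans[OF LUntil.prems] subs_self[of f] subs_self[of g] by auto
  then have e1: "lsat w 0 f = lsat w' 0 f" and e2: "lsat w 0 g = lsat w' 0 g" using LUntil.IH by simp_all
  have e3: "lsat w 1 (LUntil f g) = lsat w' 1 (LUntil f g)"
    using assms(2) LUntil.prems by blast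
  have u1: "lsat w 0 (LUntil f g) = (lsat w 0 g \<or> (lsat w 0 f \<and> lsat w 1 (LUntil f g)))"
    using lsat_until_unfold[of w 0 f g] by (simp only: One_nat_def)
  have u2: "lsat w' 0 (LUntil f g) = (lsat w' 0 g \<or> (lsat w' 0 f \<and> lsat w' 1 (LUntil f g)))"
    using lsat_until_unfold[of w' 0 f g] by (simp only: One_nat_def)
  show ?case unfolding u1 u2 e1 e2 e3 by (rule refl)
qed

section \<open>The HS family\<close>

definition htop :: hs where "htop = HNot (HAnd (HProp 0) (HNot (HProp 0)))"
definition hbeg :: "nat \<Rightarrow> hs" where "hbeg p = HDia RAbar (HProp p)"
definition hend :: "nat \<Rightarrow> hs" where "hend p = HDia RA (HProp p)"
definition hiff :: "hs \<Rightarrow> hs \<Rightarrow> hs" where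
  "hiff a b = HAnd (HNot (HAnd a (HNot b))) (HNot (HAnd b (HNot a)))"

fun psi :: "nat \<Rightarrow> hs" where
  "psi 0 = hiff (hbeg 0) (hend 0)"
| "psi (Suc n) = HNot (HAnd (hiff (hbeg (Suc n)) (hend (Suc n))) (HNot (psi n)))"

lemma hs_size_psi: "hs_size (psi n) = 18 * n + 15"
  by (induction n) (auto simp: hiff_def hbeg_def hend_def)

lemma hs_props_psi: "hs_props (psi n) = {0..n}"
  by (induction n) (auto simp: hiff_def hbeg_def hend_def)

lemma hbeg_sat: "hs_sat K \<pi> x y (hbeg p) = (p \<in> Lab K (\<pi> x))"
  by (auto simp: hbeg_def)

lemma hend_sat: "hs_sat K \<pi> x y (hend p) = (p \<in> Lab K (\<pi> y))"
  by (auto simp: hend_def)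

lemma prop_aux: "(\<not> ((\<not> (a \<and> \<not> b) \<and> \<not> (b \<and> \<not> a)) \<and> \<not> P)) = ((a = b) \<longrightarrow> P)"
  by blast

lemma psi_sat: "hs_sat K \<pi> x y (psi n) =
  ((\<forall>j\<in>{1..n}. (j \<in> Lab K (\<pi> x) \<longleftrightarrow> j \<in> Lab K (\<pi> y))) \<longrightarrow>
     (0 \<in> Lab K (\<pi> x) \<longleftrightarrow> 0 \<in> Lab K (\<pi> y)))"
proof (induction n)
  case 0 then show ?case by (auto simp: hiff_def hbeg_sat hend_sat)
next
  case (Suc n)
  have set: "{1..Suc n} = insert (Suc n) {1..n}" by auto
  show ?case unfolding psi.simps hs_sat.simps hiff_def hbeg_sat hend_sat Suc set
    unfolding prop_aux by (simp only: ball_simps imp_conjL)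
qed

section \<open>Kripke structures from lists\<close>

definition KK :: "nat \<Rightarrow> nat set list \<Rightarrow> kripke" where
  "KK n xs = \<lparr>AP = {0..n}, St = {..<length xs},
     Tr = {(i, Suc i) | i. Suc i < length xs} \<union> {(length xs - 1, length xs - 1)},
     Lab = (\<lambda>i. if i < length xs then xs ! i else {}), Init = 0\<rparr>"

definition wd :: "nat set list \<Rightarrow> nat \<Rightarrow> nat set" where
  "wd xs i = xs ! min i (length xs - 1)"

lemma KK_path:
  assumes "xs \<noteq> []" "initial_path (KK n xs) \<pi>"
  shows "\<pi> i = min i (length xs - 1)"
proof (induction i)
  case 0 then show ?case using assms by (simp add: initial_path_def KK_def)
next
  case (Suc i)
  have "(\<pi> i, \<pi> (Suc i)) \<in> Tr (KK n xs)" using assms(2) by (simp add: initial_path_def)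
  then show ?case using Suc assms(1) by (auto simp: KK_def)
qed

lemma KK_path_ex:
  assumes "xs \<noteq> []"
  shows "initial_path (KK n xs) (\<lambda>i. min i (length xs - 1))"
  using assms unfolding initial_path_def KK_def
  by (auto simp: min_def)

lemma KK_paths:
  assumes "xs \<noteq> []"
  shows "initial_path (KK n xs) \<pi> \<longleftrightarrow> \<pi> = (\<lambda>i. min i (length xs - 1))"
  using KK_path[OF assms] KK_path_ex[OF assms] by blast

lemma KK_lab:
  assumes "xs \<noteq> []" shows "Lab (KK n xs) (min i (length xs - 1)) = wd xs i"
proof -
  have "min i (length xs - 1) < length xs" using assms by (cases xs) auto
  then show ?thesis by (simp add: KK_def wd_def)
qed

lemma KK_lab0: "xs \<noteq> [] \<Longrightarrow> Lab (KK n xs) 0 = wd xs 0"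
  by (simp add: KK_def wd_def)

lemma KK_ltl: "xs \<noteq> [] \<Longrightarrow> ltl_models (KK n xs) \<phi> = lsat (wd xs) 0 \<phi>"
  unfolding ltl_models_def KK_paths ltl_sat_lsat using KK_lab by simp

lemma KK_hs: "xs \<noteq> [] \<Longrightarrow> hs_lin_models (KK n xs) (psi m) =
   (\<forall>i. (\<forall>j\<in>{1..m}. (j \<in> wd xs 0 \<longleftrightarrow> j \<in> wd xs i)) \<longrightarrow> (0 \<in> wd xs 0 \<longleftrightarrow> 0 \<in> wd xs i))"
  unfolding hs_lin_models_def KK_paths psi_sat using KK_lab KK_lab0 by simp

lemma KK_fin:
  assumes "xs \<noteq> []" "\<forall>a\<in>set xs. a \<subseteq> {0..n}"
  shows "finite_kripke (KK n xs)"
  using assms unfolding finite_kripke_def kripke_structure_def KK_def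
  apply (auto simp: less_Suc_eq_le)
  subgoal for s by (cases "Suc s < length xs") auto
  done

lemma range_wd:
  assumes "xs \<noteq> []" shows "range (wd xs) = set xs"
proof
  show "range (wd xs) \<subseteq> set xs"
  proof
    fix x assume "x \<in> range (wd xs)"
    then obtain i where x: "x = wd xs i" by blast
    have "min i (length xs - 1) < length xs" using assms by (cases xs) auto
    then show "x \<in> set xs" unfolding x wd_def by (rule nth_mem)
  qed
next
  show "set xs \<subseteq> range (wd xs)"
  proof
    fix x assume "x \<in> set xs"
    then obtain k where k: "k < length xs" "xs ! k = x" by (auto simp: in_set_conv_nth)
    then have "min k (length xs - 1) = k" by simp
    then have "wd xs k = x" using k by (simp add: wd_def)
    then show "x \<in> range (wd xs)" by (metis rangeI)
  qed
qed

section \<open>Lower bound\<close>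

lemma lower:
  assumes eq: "hs_ltl_equiv (psi n) \<phi>"
  shows "2 ^ n \<le> ltl_size \<phi>"
proof -
  obtain L where L: "set L = Pow {1..n}" using finite_list[of "Pow {1..n}"] by auto
  have Lne: "L \<noteq> []" using L by auto
  define f where "f T v = (if v \<in> T then insert 0 v else v)" for T :: "nat set set" and v :: "nat set"
  define ws where "ws T a = a # map (f T) L" for T a
  have ws_ne: "ws T a \<noteq> []" for T a by (simp add: ws_def)
  have agree: "(\<forall>j\<in>{1..n}. (j \<in> insert 0 v0 \<longleftrightarrow> j \<in> f T v)) \<longleftrightarrow> v = v0"
    if "v \<subseteq> {1..n}" "v0 \<subseteq> {1..n}" for v v0 T
  proof
    assume a: "\<forall>j\<in>{1..n}. (j \<in> insert 0 v0 \<longleftrightarrow> j \<in> f T v)"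
    show "v = v0"
    proof (intro set_eqI iffI)
      fix x assume "x \<in> v" then show "x \<in> v0" using a that by (auto simp: f_def split: if_splits)
    next
      fix x assume "x \<in> v0" then show "x \<in> v" using a that by (auto simp: f_def split: if_splits)
    qed
  qed (auto simp: f_def)
  have zero: "0 \<in> f T v \<longleftrightarrow> v \<in> T" if "v \<subseteq> {1..n}" for v T
    using that by (auto simp: f_def)
  have fact1: "lsat (wd (ws T (insert 0 v0))) 0 \<phi> \<longleftrightarrow> v0 \<in> T"
    if v0: "v0 \<subseteq> {1..n}" for T v0
  proof -
    let ?xs = "ws T (insert 0 v0)"
    have fin: "finite_kripke (KK n ?xs)"
      by (rule KK_fin[OF ws_ne]) (use that L in \<open>auto simp: ws_def f_def\<close>)
    have "lsat (wd ?xs) 0 \<phi> = ltl_models (KK n ?xs) \<phi>" using KK_ltl[OF ws_ne] by simp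
    also have "\<dots> = hs_lin_models (KK n ?xs) (psi n)"
      using eq fin hs_props_psi unfolding hs_ltl_equiv_def by (simp add: KK_def)
    also have "\<dots> = (\<forall>W\<in>set ?xs. (\<forall>j\<in>{1..n}. (j \<in> insert 0 v0 \<longleftrightarrow> j \<in> W)) \<longrightarrow> (0 \<in> insert 0 v0 \<longleftrightarrow> 0 \<in> W))"
    proof -
      have w0: "wd ?xs 0 = insert 0 v0" by (simp add: wd_def ws_def)
      have R: "set ?xs = range (wd ?xs)" using range_wd[OF ws_ne] by simp
      show ?thesis unfolding KK_hs[OF ws_ne] w0 R by simp
    qed
    also have "\<dots> = (v0 \<in> T)"
    proof
      assume a: "\<forall>W\<in>set ?xs. (\<forall>j\<in>{1..n}. (j \<in> insert 0 v0 \<longleftrightarrow> j \<in> W)) \<longrightarrow> (0 \<in> insert 0 v0 \<longleftrightarrow> 0 \<in> W)"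
      have "f T v0 \<in> set ?xs" using L v0 by (simp add: ws_def)
      then show "v0 \<in> T" using a agree[OF v0 v0, of T] zero[OF v0, of T] by blast
    next
      assume a: "v0 \<in> T"
      show "\<forall>W\<in>set ?xs. (\<forall>j\<in>{1..n}. (j \<in> insert 0 v0 \<longleftrightarrow> j \<in> W)) \<longrightarrow> (0 \<in> insert 0 v0 \<longleftrightarrow> 0 \<in> W)"
      proof
        fix W assume "W \<in> set ?xs"
        then consider "W = insert 0 v0" | v where "v \<subseteq> {1..n}" "W = f T v"
          using L by (auto simp: ws_def)
        then show "(\<forall>j\<in>{1..n}. (j \<in> insert 0 v0 \<longleftrightarrow> j \<in> W)) \<longrightarrow> (0 \<in> insert 0 v0 \<longleftrightarrow> 0 \<in> W)"
        proof cases
          case 1 then show ?thesis by simp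
        next
          case 2 then show ?thesis using agree[OF 2(1) v0, of T] zero[OF 2(1), of T] a by auto
        qed
      qed
    qed
    finally show ?thesis .
  qed
  have fact2: "lsat (wd (ws T a)) 1 \<chi> = lsat (wd (ws T b)) 1 \<chi>" for T a b \<chi>
  proof (rule lsat_cong, intro allI impI)
    fix j :: nat assume "1 \<le> j"
    then have "min j (length (ws T a) - 1) \<noteq> 0" "min j (length (ws T b) - 1) \<noteq> 0"
      using Lne by (auto simp: ws_def)
    then show "wd (ws T a) j = wd (ws T b) j"
      using Lne by (auto simp: wd_def ws_def nth_Cons min_def split: nat.split)
  qed
  define sig where "sig T = {\<chi> \<in> subs \<phi>. lsat (wd (ws T {})) 1 \<chi>}" for T
  have w0: "wd (ws T a) 0 = a" for T a by (simp add: wd_def ws_def)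
  have sub: "T \<subseteq> T'" if "T \<subseteq> Pow {1..n}" "sig T = sig T'" for T T'
  proof
    fix v0 assume v0T: "v0 \<in> T"
    then have v0: "v0 \<subseteq> {1..n}" using that by auto
    let ?a = "insert 0 v0"
    have "lsat (wd (ws T ?a)) 0 \<phi> = lsat (wd (ws T' ?a)) 0 \<phi>"
    proof (rule step_lemma[OF _ _ subs_self])
      show "wd (ws T ?a) 0 = wd (ws T' ?a) 0" by (simp add: w0)
      show "\<forall>\<chi>\<in>subs \<phi>. lsat (wd (ws T ?a)) 1 \<chi> = lsat (wd (ws T' ?a)) 1 \<chi>"
      proof
        fix \<chi> assume c: "\<chi> \<in> subs \<phi>"
        have "lsat (wd (ws T ?a)) 1 \<chi> = lsat (wd (ws T {})) 1 \<chi>" by (rule fact2)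
        also have "\<dots> = (\<chi> \<in> sig T)" using c by (simp add: sig_def)
        also have "\<dots> = (\<chi> \<in> sig T')" using that by simp
        also have "\<dots> = lsat (wd (ws T' {})) 1 \<chi>" using c by (simp add: sig_def)
        also have "\<dots> = lsat (wd (ws T' ?a)) 1 \<chi>" by (rule fact2)
        finally show "lsat (wd (ws T ?a)) 1 \<chi> = lsat (wd (ws T' ?a)) 1 \<chi>" .
      qed
    qed
    then show "v0 \<in> T'" using fact1[OF v0, of T] fact1[OF v0, of T'] v0T by simp
  qed
  have inj: "inj_on sig (Pow (Pow {1..n}))"
    by (rule inj_onI) (metis PowD sub subset_antisym)
  have "card (Pow (Pow {1..n})) \<le> card (Pow (subs \<phi>))"
    by (rule card_inj_on_le[OF inj]) (auto simp: sig_def finite_subs)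
  then have "(2::nat) ^ (2 ^ n) \<le> 2 ^ card (subs \<phi>)"
    by (simp add: card_Pow finite_subs)
  then have "2 ^ n \<le> card (subs \<phi>)" by (rule power_le_imp_le_exp[rotated]) simp
  then show ?thesis using card_subs[of \<phi>] by linarith
qed

lemma growth: "\<exists>n\<ge>1. c * (18*n+15)^k < (2::nat)^n"
proof -
  define t where "t = c + 8*k + 1"
  define m where "m = 2*t"
  define n where "n = (2::nat)^m"
  have n1: "n \<ge> 1" by (simp add: n_def)
  have t1: "t \<ge> 1" by (simp add: t_def)
  have "18*n+15 \<le> 64 * n" using n1 by linarith
  also have "64 * n = 2^(m+6)" unfolding n_def power_add by simp
  finally have "(18*n+15)^k \<le> (2^(m+6))^k" by (rule power_mono) simp
  also have "\<dots> = 2^((m+6)*k)" by (rule power_mult[symmetric])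
  finally have A: "(18*n+15)^k \<le> 2^((m+6)*k)" .
  have "c < 2^c" by (rule less_exp)
  have "c * (18*n+15)^k \<le> c * 2^((m+6)*k)" using A by (rule mult_le_mono2)
  also have "\<dots> < 2^c * 2^((m+6)*k)" using \<open>c < 2^c\<close> by (intro mult_strict_right_mono) auto
  also have "\<dots> = 2^(c + (m+6)*k)" by (rule power_add[symmetric])
  finally have C: "c * (18*n+15)^k < 2^(c + (m+6)*k)" .
  have "6*k \<le> 6*k*t" using mult_le_mono2[OF t1, of "6*k"] by simp
  moreover have "(m+6)*k = 2*k*t + 6*k" unfolding m_def by (simp add: algebra_simps)
  moreover have "c \<le> c*t" using mult_le_mono2[OF t1, of c] by simp
  moreover have "t*t = t*(c + 8*k + 1)" by (subst (2) t_def) (rule refl)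
  moreover have "t*(c + 8*k + 1) = c*t + 8*k*t + t" by (simp add: algebra_simps)
  ultimately have "c + (m+6)*k \<le> t*t" by linarith
  also have "\<dots> \<le> 2^t*2^t" using less_exp[of t] by (intro mult_mono) auto
  also have "\<dots> = 2^(t+t)" by (rule power_add[symmetric])
  also have "\<dots> = n" unfolding n_def m_def mult_2 by (rule refl)
  finally have E: "c + (m+6)*k \<le> n" .
  have D: "(2::nat)^(c + (m+6)*k) \<le> 2^n" using E by (rule power_increasing) simp
  have F: "c * (18*n+15)^k < 2^n" by (rule less_le_trans[OF C D])
  show ?thesis using F n1 by (intro exI[of _ n] conjI)
qed

theorem theorem3p5:
  shows "\<exists>\<psi> :: nat \<Rightarrow> hs. \<forall>c k :: nat. \<exists>n\<ge>1. \<forall>\<phi>.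
           hs_ltl_equiv (\<psi> n) \<phi> \<longrightarrow> ltl_size \<phi> > c * hs_size (\<psi> n) ^ k"
proof (intro exI[of _ psi] allI)
  fix c k :: nat
  obtain n where n1: "n \<ge> 1" and lt: "c * (18 * n + 15) ^ k < 2 ^ n" using growth by blast
  have all: "\<forall>\<phi>. hs_ltl_equiv (psi n) \<phi> \<longrightarrow> ltl_size \<phi> > c * hs_size (psi n) ^ k"
  proof (rule allI, rule impI)
    fix \<phi> assume "hs_ltl_equiv (psi n) \<phi>"
    then have le: "2 ^ n \<le> ltl_size \<phi>" by (rule lower)
    have eq: "c * hs_size (psi n) ^ k = c * (18 * n + 15) ^ k" by (simp only: hs_size_psi)
    show "ltl_size \<phi> > c * hs_size (psi n) ^ k" unfolding eq using lt le by (rule less_le_trans)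
  qed
  show "\<exists>n\<ge>1. \<forall>\<phi>. hs_ltl_equiv (psi n) \<phi> \<longrightarrow> ltl_size \<phi> > c * hs_size (psi n) ^ k"
    by (rule exI[of _ n], rule conjI, rule n1, rule all)
qed

end
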